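(* Let $Q$ be a dimer quiver with dimer algebra $A_Q$, and let $t:=\sum_{i\in Q_0}u_i\in A_Q$. Then $\mathbb{C}[t]\subseteq Z(A_Q)$, the centre of $A_Q$.
   Context: A quiver with faces is a finite quiver $Q=(Q_0,Q_1)$ with a finite set $Q_2$ of faces and a map $\partial$ sending each face to an oriented cycle. A dimer quiver is one with $Q_2=Q_2^+\sqcup Q_2^-$ such that: no loops; each arrow lies on the boundary of one or two faces, and if two, one in $Q_2^+$ and one in $Q_2^-$; at each vertex $i$ the incidence graph (vertices: arrows at $i$; edge between $\alpha,\beta$ if "$\alpha$ into $i$, $\beta$ out of $i$" is part of a face boundary) is non-empty and connected. An arrow is internal if it lies on two faces. Paths compose left to right. The dimer algebra $A_Q$ is the path algebra $\mathbb{C}Q$ modulo the ideal generated by $p_{F_1}-p_{F_2}$ for each internal arrow $\alpha$, where $F_1\in Q_2^+$, $F_2\in Q_2^-$ are the two faces containing $\alpha$ and $\alpha p_{F_j}$ is $\partial F_j$ read starting with $\alpha$. For each vertex $i$, the boundary cycles of all faces through $i$, read as cycles starting and ending at $i$, are equal in $A_Q$; $u_i$ denotes this element. *)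

theory Defs
  imports Complex_Main "HOL-Computational_Algebra.Polynomial"
begin

text \<open>A quiver with faces: vertices Q0, arrows Q1 with source/target maps,
  faces Q2 = Q2p \<union> Q2m (disjoint), and a boundary map bd sending each face to
  an oriented cycle, given as a nonempty list of arrows.\<close>

record ('v, 'a, 'f) qwf =
  Q0 :: "'v set"
  Q1 :: "'a set"
  src :: "'a \<Rightarrow> 'v"
  tgt :: "'a \<Rightarrow> 'v"
  Q2p :: "'f set"
  Q2m :: "'f set"
  bd :: "'f \<Rightarrow> 'a list"

definition Q2 :: "('v, 'a, 'f) qwf \<Rightarrow> 'f set" where
  "Q2 Q = Q2p Q \<union> Q2m Q"

text \<open>Paths: a start vertex together with a list of arrows (composed left to right).
  The trivial path at i is (i, []).\<close>

type_synonym ('v, 'a) path = "'v \<times> 'a list"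

definition composable_list :: "('v, 'a, 'f) qwf \<Rightarrow> 'a list \<Rightarrow> bool" where
  "composable_list Q as \<longleftrightarrow> (\<forall>k. Suc k < length as \<longrightarrow> tgt Q (as ! k) = src Q (as ! Suc k))"

definition valid_path :: "('v, 'a, 'f) qwf \<Rightarrow> ('v, 'a) path \<Rightarrow> bool" where
  "valid_path Q p \<longleftrightarrow> fst p \<in> Q0 Q \<and> set (snd p) \<subseteq> Q1 Q \<and>
     (snd p \<noteq> [] \<longrightarrow> src Q (hd (snd p)) = fst p) \<and> composable_list Q (snd p)"

definition vert_at :: "('v, 'a, 'f) qwf \<Rightarrow> ('v, 'a) path \<Rightarrow> nat \<Rightarrow> 'v" where
  "vert_at Q p k = (if k = 0 then fst p else tgt Q (snd p ! (k - 1)))"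

definition is_cycle :: "('v, 'a, 'f) qwf \<Rightarrow> 'a list \<Rightarrow> bool" where
  "is_cycle Q c \<longleftrightarrow> c \<noteq> [] \<and> valid_path Q (src Q (hd c), c) \<and> tgt Q (last c) = src Q (hd c)"

definition consec_in :: "'a list \<Rightarrow> 'a \<Rightarrow> 'a \<Rightarrow> bool" where
  "consec_in c \<alpha> \<beta> \<longleftrightarrow> (\<exists>k < length c. c ! k = \<alpha> \<and> c ! ((Suc k) mod length c) = \<beta>)"

definition arrows_at :: "('v, 'a, 'f) qwf \<Rightarrow> 'v \<Rightarrow> 'a set" where
  "arrows_at Q i = {\<alpha> \<in> Q1 Q. src Q \<alpha> = i \<or> tgt Q \<alpha> = i}"

definition inc_edge :: "('v, 'a, 'f) qwf \<Rightarrow> 'v \<Rightarrow> 'a \<Rightarrow> 'a \<Rightarrow> bool" where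
  "inc_edge Q i \<alpha> \<beta> \<longleftrightarrow> \<alpha> \<in> Q1 Q \<and> \<beta> \<in> Q1 Q \<and> tgt Q \<alpha> = i \<and> src Q \<beta> = i \<and>
     (\<exists>F \<in> Q2 Q. consec_in (bd Q F) \<alpha> \<beta>)"

definition inc_connected :: "('v, 'a, 'f) qwf \<Rightarrow> 'v \<Rightarrow> bool" where
  "inc_connected Q i \<longleftrightarrow>
     (\<forall>\<alpha> \<in> arrows_at Q i. \<forall>\<beta> \<in> arrows_at Q i.
        (\<alpha>, \<beta>) \<in> {(x, y). inc_edge Q i x y \<or> inc_edge Q i y x}\<^sup>*)"

definition occ :: "('v, 'a, 'f) qwf \<Rightarrow> 'a \<Rightarrow> nat" where
  "occ Q \<alpha> = (\<Sum>F \<in> Q2 Q. count_list (bd Q F) \<alpha>)"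

definition dimer_quiver :: "('v, 'a, 'f) qwf \<Rightarrow> bool" where
  "dimer_quiver Q \<longleftrightarrow>
     finite (Q0 Q) \<and> finite (Q1 Q) \<and> finite (Q2 Q) \<and>
     Q2p Q \<inter> Q2m Q = {} \<and>
     (\<forall>\<alpha> \<in> Q1 Q. src Q \<alpha> \<in> Q0 Q \<and> tgt Q \<alpha> \<in> Q0 Q) \<and>
     (\<forall>F \<in> Q2 Q. is_cycle Q (bd Q F)) \<and>
     (\<forall>\<alpha> \<in> Q1 Q. src Q \<alpha> \<noteq> tgt Q \<alpha>) \<and>
     (\<forall>\<alpha> \<in> Q1 Q. (occ Q \<alpha> = 1 \<or> occ Q \<alpha> = 2) \<and>
        (occ Q \<alpha> = 2 \<longrightarrow> (\<exists>F1 \<in> Q2p Q. \<exists>F2 \<in> Q2m Q. \<alpha> \<in> set (bd Q F1) \<and> \<alpha> \<in> set (bd Q F2)))) \<and>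
     (\<forall>i \<in> Q0 Q. arrows_at Q i \<noteq> {} \<and> inc_connected Q i)"

text \<open>Elements of the path algebra are complex-valued functions on paths, with finite
  support consisting of valid paths.\<close>

type_synonym ('v, 'a) pelem = "('v, 'a) path \<Rightarrow> complex"

definition in_pathalg :: "('v, 'a, 'f) qwf \<Rightarrow> ('v, 'a) pelem \<Rightarrow> bool" where
  "in_pathalg Q x \<longleftrightarrow> finite {p. x p \<noteq> 0} \<and> (\<forall>p. x p \<noteq> 0 \<longrightarrow> valid_path Q p)"

definition basis :: "('v, 'a) path \<Rightarrow> ('v, 'a) pelem" where
  "basis p = (\<lambda>q. if q = p then 1 else 0)"

definition padd :: "('v, 'a) pelem \<Rightarrow> ('v, 'a) pelem \<Rightarrow> ('v, 'a) pelem" where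
  "padd x y = (\<lambda>p. x p + y p)"

definition psub :: "('v, 'a) pelem \<Rightarrow> ('v, 'a) pelem \<Rightarrow> ('v, 'a) pelem" where
  "psub x y = (\<lambda>p. x p - y p)"

definition pscale :: "complex \<Rightarrow> ('v, 'a) pelem \<Rightarrow> ('v, 'a) pelem" where
  "pscale c x = (\<lambda>p. c * x p)"

text \<open>Multiplication (concatenation of paths, left to right), extended bilinearly:
  the coefficient of a path is summed over all its splittings.\<close>
definition pmult :: "('v, 'a, 'f) qwf \<Rightarrow> ('v, 'a) pelem \<Rightarrow> ('v, 'a) pelem \<Rightarrow> ('v, 'a) pelem" where
  "pmult Q x y = (\<lambda>p. if valid_path Q p then
      (\<Sum>k \<in> {0..length (snd p)}. x (fst p, take k (snd p)) * y (vert_at Q p k, drop k (snd p)))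
    else 0)"

definition punit :: "('v, 'a, 'f) qwf \<Rightarrow> ('v, 'a) pelem" where
  "punit Q = (\<lambda>p. \<Sum>i \<in> Q0 Q. basis (i, []) p)"

definition internal :: "('v, 'a, 'f) qwf \<Rightarrow> 'a \<Rightarrow> bool" where
  "internal Q \<alpha> \<longleftrightarrow> \<alpha> \<in> Q1 Q \<and> occ Q \<alpha> = 2"

definition rot_at :: "'a list \<Rightarrow> nat \<Rightarrow> 'a list" where
  "rot_at c k = drop k c @ take k c"

text \<open>p_F for arrow \<alpha> = c!k on the boundary c of F: the boundary read starting with \<alpha>,
  with \<alpha> removed; it is a path from tgt \<alpha> to src \<alpha>.\<close>
definition pF :: "('v, 'a, 'f) qwf \<Rightarrow> 'f \<Rightarrow> nat \<Rightarrow> ('v, 'a) path" where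
  "pF Q F k = (tgt Q (bd Q F ! k), tl (rot_at (bd Q F) k))"

definition dimer_relations :: "('v, 'a, 'f) qwf \<Rightarrow> ('v, 'a) pelem set" where
  "dimer_relations Q = {psub (basis (pF Q F1 k1)) (basis (pF Q F2 k2)) | \<alpha> F1 F2 k1 k2.
      internal Q \<alpha> \<and> F1 \<in> Q2p Q \<and> F2 \<in> Q2m Q \<and>
      k1 < length (bd Q F1) \<and> bd Q F1 ! k1 = \<alpha> \<and>
      k2 < length (bd Q F2) \<and> bd Q F2 ! k2 = \<alpha>}"

inductive_set dimer_ideal :: "('v, 'a, 'f) qwf \<Rightarrow> ('v, 'a) pelem set" for Q where
  zero: "(\<lambda>_. 0) \<in> dimer_ideal Q"
| rel: "r \<in> dimer_relations Q \<Longrightarrow> r \<in> dimer_ideal Q"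
| add: "x \<in> dimer_ideal Q \<Longrightarrow> y \<in> dimer_ideal Q \<Longrightarrow> padd x y \<in> dimer_ideal Q"
| scale: "x \<in> dimer_ideal Q \<Longrightarrow> pscale c x \<in> dimer_ideal Q"
| lmult: "x \<in> dimer_ideal Q \<Longrightarrow> valid_path Q p \<Longrightarrow> pmult Q (basis p) x \<in> dimer_ideal Q"
| rmult: "x \<in> dimer_ideal Q \<Longrightarrow> valid_path Q p \<Longrightarrow> pmult Q x (basis p) \<in> dimer_ideal Q"

text \<open>Equality in \<open>A_Q = \<complex>Q / I\<close>.\<close>
definition dimer_eq :: "('v, 'a, 'f) qwf \<Rightarrow> ('v, 'a) pelem \<Rightarrow> ('v, 'a) pelem \<Rightarrow> bool" where
  "dimer_eq Q x y \<longleftrightarrow> psub x y \<in> dimer_ideal Q"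

text \<open>u_i: the boundary cycle of a face through i, read as a cycle starting and ending at i
  (a choice of representative; all such choices agree in \<open>A_Q\<close>).\<close>
definition face_cycles_at :: "('v, 'a, 'f) qwf \<Rightarrow> 'v \<Rightarrow> ('v, 'a) path set" where
  "face_cycles_at Q i = {(i, rot_at (bd Q F) k) | F k.
      F \<in> Q2 Q \<and> k < length (bd Q F) \<and> src Q (bd Q F ! k) = i}"

definition u_elem :: "('v, 'a, 'f) qwf \<Rightarrow> 'v \<Rightarrow> ('v, 'a) pelem" where
  "u_elem Q i = basis (SOME c. c \<in> face_cycles_at Q i)"

definition t_elem :: "('v, 'a, 'f) qwf \<Rightarrow> ('v, 'a) pelem" where
  "t_elem Q = (\<lambda>p. \<Sum>i \<in> Q0 Q. u_elem Q i p)"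

fun ppow :: "('v, 'a, 'f) qwf \<Rightarrow> ('v, 'a) pelem \<Rightarrow> nat \<Rightarrow> ('v, 'a) pelem" where
  "ppow Q x 0 = punit Q"
| "ppow Q x (Suc n) = pmult Q x (ppow Q x n)"

definition peval :: "('v, 'a, 'f) qwf \<Rightarrow> complex poly \<Rightarrow> ('v, 'a) pelem \<Rightarrow> ('v, 'a) pelem" where
  "peval Q f x = (\<lambda>p. \<Sum>k \<in> {0..degree f}. coeff f k * ppow Q x k p)"

definition central :: "('v, 'a, 'f) qwf \<Rightarrow> ('v, 'a) pelem \<Rightarrow> bool" where
  "central Q z \<longleftrightarrow> (\<forall>x. in_pathalg Q x \<longrightarrow> dimer_eq Q (pmult Q z x) (pmult Q x z))"

end

theory Submission
  imports Defs
begin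

definition pcat :: "('v,'a) path \<Rightarrow> ('v,'a) path \<Rightarrow> ('v,'a) path" where
  "pcat a b = (fst a, snd a @ snd b)"

definition vend :: "('v, 'a, 'f) qwf \<Rightarrow> ('v,'a) path \<Rightarrow> 'v" where
  "vend Q a = vert_at Q a (length (snd a))"

lemma vert_at_append:
  "k \<le> length as \<Longrightarrow> vert_at Q (v, as @ bs) k = vert_at Q (v, as) k"
  by (auto simp: vert_at_def nth_append)

lemma composable_append:
  "composable_list Q (as @ bs) \<longleftrightarrow> composable_list Q as \<and> composable_list Q bs \<and>
     (as \<noteq> [] \<longrightarrow> bs \<noteq> [] \<longrightarrow> tgt Q (last as) = src Q (hd bs))"
proof (rule iffI)
  assume H0: "composable_list Q (as @ bs)"
  have H: "Suc k < length as + length bs \<Longrightarrow> tgt Q ((as @ bs) ! k) = src Q ((as @ bs) ! Suc k)" for k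
    using H0 by (simp add: composable_list_def)
  have 1: "composable_list Q as" unfolding composable_list_def
  proof (intro allI impI)
    fix k assume "Suc k < length as"
    then show "tgt Q (as ! k) = src Q (as ! Suc k)" using H[of k] by (simp add: nth_append)
  qed
  have 2: "composable_list Q bs" unfolding composable_list_def
  proof (intro allI impI)
    fix k assume "Suc k < length bs"
    then show "tgt Q (bs ! k) = src Q (bs ! Suc k)" using H[of "length as + k"] by (simp add: nth_append)
  qed
  have 3: "tgt Q (last as) = src Q (hd bs)" if "as \<noteq> []" "bs \<noteq> []"
    using H[of "length as - 1"] that by (simp add: nth_append last_conv_nth hd_conv_nth)
  show "composable_list Q as \<and> composable_list Q bs \<and>
     (as \<noteq> [] \<longrightarrow> bs \<noteq> [] \<longrightarrow> tgt Q (last as) = src Q (hd bs))" using 1 2 3 by blast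
next
  assume a: "composable_list Q as \<and> composable_list Q bs \<and>
     (as \<noteq> [] \<longrightarrow> bs \<noteq> [] \<longrightarrow> tgt Q (last as) = src Q (hd bs))"
  show "composable_list Q (as @ bs)" unfolding composable_list_def
  proof (intro allI impI)
    fix k assume a4: "Suc k < length (as @ bs)"
    consider "Suc k < length as" | "Suc k = length as" | "k \<ge> length as" by linarith
    then show "tgt Q ((as @ bs) ! k) = src Q ((as @ bs) ! Suc k)"
    proof cases
      case 1 then show ?thesis using a by (simp add: nth_append composable_list_def)
    next
      case 2
      then have k: "k = length as - 1" "as \<noteq> []" "bs \<noteq> []" using a4 by auto
      then show ?thesis using a 2
        by (auto simp: nth_append last_conv_nth hd_conv_nth)
    next
      case 3
      then obtain m where m: "k = length as + m" by (metis le_iff_add)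
      then show ?thesis using a a4 by (simp add: nth_append composable_list_def)
    qed
  qed
qed


lemma vend_simp: "vend Q (v, as) = (if as = [] then v else tgt Q (last as))"
  by (simp add: vend_def vert_at_def last_conv_nth)


lemma valid_pcat:
  assumes "valid_path Q a" "valid_path Q b" "vend Q a = fst b"
  shows "valid_path Q (pcat a b)"
proof -
  obtain v as where a: "a = (v, as)" by (cases a)
  obtain w bs where b: "b = (w, bs)" by (cases b)
  show ?thesis using assms unfolding a b pcat_def valid_path_def
    by (auto simp: composable_append vend_simp split: if_splits)
qed

lemma vend_pcat:
  assumes "vend Q a = fst b"
  shows "vend Q (pcat a b) = vend Q b"
  using assms by (cases a; cases b) (auto simp: pcat_def vend_simp)

lemma valid_take: "valid_path Q (v, as) \<Longrightarrow> valid_path Q (v, take k as)"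
  using composable_append[of Q "take k as" "drop k as"]
  by (auto simp: valid_path_def dest: in_set_takeD)

lemma vert_at_take: "j \<le> k \<Longrightarrow> vert_at Q (v, take k as) j = vert_at Q (v, as) j"
  by (auto simp: vert_at_def)

lemma vert_at_in_Q0:
  assumes "\<forall>\<alpha>\<in>Q1 Q. tgt Q \<alpha> \<in> Q0 Q" "valid_path Q (v, as)" "k \<le> length as"
  shows "vert_at Q (v, as) k \<in> Q0 Q"
  using assms nth_mem[of "k - 1" as] by (auto simp: vert_at_def valid_path_def subset_iff)

lemma vert_at_drop:
  assumes "k + m \<le> length as" "valid_path Q (v, as)"
  shows "vert_at Q (vert_at Q (v,as) k, drop k as) m = vert_at Q (v,as) (k+m)"
  using assms by (auto simp: vert_at_def)

lemma src_at:
  assumes "valid_path Q (v, as)" "k < length as"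
  shows "src Q (as ! k) = vert_at Q (v, as) k"
proof (cases k)
  case 0 then show ?thesis using assms by (auto simp: valid_path_def vert_at_def hd_conv_nth)
next
  case (Suc j) then show ?thesis using assms by (auto simp: valid_path_def vert_at_def composable_list_def)
qed

lemma valid_drop:
  assumes "\<forall>\<alpha>\<in>Q1 Q. tgt Q \<alpha> \<in> Q0 Q" "valid_path Q (v, as)" "k \<le> length as"
  shows "valid_path Q (vert_at Q (v,as) k, drop k as)"
proof -
  have "composable_list Q (drop k as)"
    using composable_append[of Q "take k as" "drop k as"] assms(2) by (simp add: valid_path_def)
  moreover have "drop k as \<noteq> [] \<Longrightarrow> src Q (hd (drop k as)) = vert_at Q (v, as) k"
    using src_at[OF assms(2), of k] by (simp add: hd_drop_conv_nth)
  ultimately show ?thesis using vert_at_in_Q0[OF assms] assms(2)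
    by (auto simp: valid_path_def dest: in_set_dropD)
qed

lemma composable_single[simp]: "composable_list Q [x]"
  by (simp add: composable_list_def)

lemma valid_Cons:
  assumes "\<forall>\<alpha>\<in>Q1 Q. tgt Q \<alpha> \<in> Q0 Q"
  shows "valid_path Q (v, \<alpha> # as) \<longleftrightarrow> v \<in> Q0 Q \<and> \<alpha> \<in> Q1 Q \<and> src Q \<alpha> = v \<and> valid_path Q (tgt Q \<alpha>, as)"
  using composable_append[of Q "[\<alpha>]" as] assms by (auto simp: valid_path_def)


lemma basis_mult:
  fixes Q :: "('v,'a,'f) qwf" and a b :: "('v,'a) path"
  shows "pmult Q (basis a) (basis b) = (if valid_path Q (pcat a b) \<and> vert_at Q (pcat a b) (length (snd a)) = fst b
      then basis (pcat a b) else (\<lambda>_. 0))"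
proof (rule ext)
  fix q :: "('v,'a) path"
  obtain v as where a: "a = (v, as)" by (cases a)
  obtain w bs where b: "b = (w, bs)" by (cases b)
  obtain x l where q: "q = (x, l)" by (cases q)
  let ?c = "if q = (v, as @ bs) \<and> vert_at Q q (length as) = w then 1 else (0::complex)"
  have summ: "basis a (fst q, take k (snd q)) * basis b (vert_at Q q k, drop k (snd q)) =
      (if k = length as then ?c else 0)" if "k \<in> {0..length l}" for k
  proof -
    have "(x = v \<and> take k l = as \<and> vert_at Q q k = w \<and> drop k l = bs) \<longleftrightarrow>
          (k = length as \<and> q = (v, as @ bs) \<and> vert_at Q q (length as) = w)"
    proof
      assume h: "x = v \<and> take k l = as \<and> vert_at Q q k = w \<and> drop k l = bs"
      then have h1: "x = v" "take k l = as" "vert_at Q q k = w" "drop k l = bs" by blast+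
      then have l: "l = as @ bs" by (metis append_take_drop_id)
      have "length (take k l) = k" using that by simp
      then have k: "k = length as" using h1 by simp
      show "k = length as \<and> q = (v, as @ bs) \<and> vert_at Q q (length as) = w"
        using h1 q l k by simp
    next
      assume h: "k = length as \<and> q = (v, as @ bs) \<and> vert_at Q q (length as) = w"
      then have k: "k = length as" and xl: "x = v" "l = as @ bs" and vw: "vert_at Q q k = w"
        using q by auto
      show "x = v \<and> take k l = as \<and> vert_at Q q k = w \<and> drop k l = bs"
        using k xl vw by simp
    qed
    moreover have "basis a (fst q, take k (snd q)) * basis b (vert_at Q q k, drop k (snd q)) =
      (if x = v \<and> take k l = as \<and> vert_at Q q k = w \<and> drop k l = bs then 1 else 0)"
      unfolding a b q basis_def by (cases "x = v") simp_all
    moreover have "(if k = length as then ?c else 0) =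
      (if k = length as \<and> q = (v, as @ bs) \<and> vert_at Q q (length as) = w then 1 else 0)"
      by force
    ultimately show ?thesis by presburger
  qed
  have "pmult Q (basis a) (basis b) q = (if valid_path Q q then ?c else 0)"
  proof (cases "valid_path Q q")
    case True
    have "(\<Sum>k\<in>{0..length (snd q)}. basis a (fst q, take k (snd q)) * basis b (vert_at Q q k, drop k (snd q)))
        = (\<Sum>k\<in>{0..length (snd q)}. if k = length as then ?c else 0)"
      by (rule sum.cong[OF refl], rule summ) (simp add: q)
    also have "\<dots> = ?c" by (auto simp: q)
    finally show ?thesis using True by (simp add: pmult_def)
  qed (simp add: pmult_def)
  then show "pmult Q (basis a) (basis b) q = (if valid_path Q (pcat a b) \<and> vert_at Q (pcat a b) (length (snd a)) = fst b
      then basis (pcat a b) else (\<lambda>_. 0)) q"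
    by (auto simp: a b pcat_def basis_def)
qed

lemma basis_mult_ok:
  assumes "valid_path Q a" "valid_path Q b" "vend Q a = fst b"
  shows "pmult Q (basis a) (basis b) = basis (pcat a b)"
proof -
  have "vert_at Q (pcat a b) (length (snd a)) = fst b"
    using assms(3) by (cases a) (simp add: pcat_def vert_at_append vend_def)
  then show ?thesis using valid_pcat[OF assms] by (simp add: basis_mult)
qed

lemma pmult_sum_left:
  "pmult Q (\<lambda>q. \<Sum>i\<in>I. f i q) y = (\<lambda>q. \<Sum>i\<in>I. pmult Q (f i) y q)"
  by (rule ext) (auto simp: pmult_def sum_distrib_right intro: sum.swap)

lemma pmult_sum_right:
  "pmult Q y (\<lambda>q. \<Sum>i\<in>I. f i q) = (\<lambda>q. \<Sum>i\<in>I. pmult Q y (f i) q)"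
  by (rule ext) (auto simp: pmult_def sum_distrib_left intro: sum.swap)

lemma pmult_scale_left: "pmult Q (\<lambda>q. c * x q) y = (\<lambda>q. c * pmult Q x y q)"
  by (rule ext) (auto simp: pmult_def sum_distrib_left mult.assoc)

lemma pmult_scale_right: "pmult Q y (\<lambda>q. c * x q) = (\<lambda>q. c * pmult Q y x q)"
  by (rule ext) (auto simp: pmult_def sum_distrib_left mult.left_commute)

lemma pmult_psub_left: "pmult Q (psub x z) y = psub (pmult Q x y) (pmult Q z y)"
  by (rule ext) (auto simp: pmult_def psub_def sum_subtractf left_diff_distrib)

lemma pmult_psub_right: "pmult Q y (psub x z) = psub (pmult Q y x) (pmult Q y z)"
  by (rule ext) (auto simp: pmult_def psub_def sum_subtractf right_diff_distrib)


lemma ideal_sum: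
  assumes "finite S" "\<forall>p\<in>S. f p \<in> dimer_ideal Q"
  shows "(\<lambda>q. \<Sum>p\<in>S. f p q) \<in> dimer_ideal Q"
  using assms
proof (induction S rule: finite_induct)
  case empty then show ?case using dimer_ideal.zero by simp
next
  case (insert a S)
  have "(\<lambda>q. \<Sum>p\<in>insert a S. f p q) = padd (f a) (\<lambda>q. \<Sum>p\<in>S. f p q)"
    using insert by (simp add: padd_def)
  then show ?case using insert dimer_ideal.add by (metis insert_iff)
qed

lemma ideal_scale: "x \<in> dimer_ideal Q \<Longrightarrow> (\<lambda>q. c * x q) \<in> dimer_ideal Q"
  using dimer_ideal.scale[of x Q c] by (simp add: pscale_def)

lemma decomp:
  assumes "in_pathalg Q x"
  shows "x = (\<lambda>q. \<Sum>p\<in>{p. x p \<noteq> 0}. x p * basis p q)"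
proof (rule ext)
  fix q
  have f: "finite {p. x p \<noteq> 0}" using assms by (simp add: in_pathalg_def)
  have "(\<Sum>p\<in>{p. x p \<noteq> 0}. x p * basis p q) = (\<Sum>p\<in>{p. x p \<noteq> 0}. if p = q then x q else 0)"
    by (rule sum.cong) (auto simp: basis_def)
  also have "\<dots> = x q" using f by (simp add: sum.delta')
  finally show "x q = (\<Sum>p\<in>{p. x p \<noteq> 0}. x p * basis p q)" by simp
qed

lemma ideal_lmult:
  assumes "in_pathalg Q z" "x \<in> dimer_ideal Q"
  shows "pmult Q z x \<in> dimer_ideal Q"
proof -
  have "pmult Q z x = pmult Q (\<lambda>q. \<Sum>p\<in>{p. z p \<noteq> 0}. z p * basis p q) x"
    using decomp[OF assms(1)] by simp
  also have "\<dots> = (\<lambda>q. \<Sum>p\<in>{p. z p \<noteq> 0}. z p * pmult Q (basis p) x q)"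
    by (simp add: pmult_sum_left pmult_scale_left)
  finally show ?thesis using assms
    by (auto simp: in_pathalg_def intro!: ideal_sum ideal_scale dimer_ideal.lmult)
qed

lemma ideal_rmult:
  assumes "in_pathalg Q z" "x \<in> dimer_ideal Q"
  shows "pmult Q x z \<in> dimer_ideal Q"
proof -
  have "pmult Q x z = pmult Q x (\<lambda>q. \<Sum>p\<in>{p. z p \<noteq> 0}. z p * basis p q)"
    using decomp[OF assms(1)] by simp
  also have "\<dots> = (\<lambda>q. \<Sum>p\<in>{p. z p \<noteq> 0}. z p * pmult Q x (basis p) q)"
    by (simp add: pmult_sum_right pmult_scale_right)
  finally show ?thesis using assms
    by (auto simp: in_pathalg_def intro!: ideal_sum ideal_scale dimer_ideal.rmult)
qed

lemma deq_refl: "dimer_eq Q x x"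
  using dimer_ideal.zero by (simp add: dimer_eq_def psub_def)

lemma deq_eq: "x = y \<Longrightarrow> dimer_eq Q x y"
  by (simp add: deq_refl)

lemma deq_sym: "dimer_eq Q x y \<Longrightarrow> dimer_eq Q y x"
  using ideal_scale[of "psub x y" Q "-1"] by (simp add: dimer_eq_def psub_def)

lemma deq_trans: "dimer_eq Q x y \<Longrightarrow> dimer_eq Q y z \<Longrightarrow> dimer_eq Q x z"
  using dimer_ideal.add[of "psub x y" Q "psub y z"] by (simp add: dimer_eq_def psub_def padd_def)

lemma deq_lmult: "in_pathalg Q z \<Longrightarrow> dimer_eq Q x y \<Longrightarrow> dimer_eq Q (pmult Q z x) (pmult Q z y)"
  by (simp add: dimer_eq_def ideal_lmult flip: pmult_psub_right)

lemma deq_rmult: "in_pathalg Q z \<Longrightarrow> dimer_eq Q x y \<Longrightarrow> dimer_eq Q (pmult Q x z) (pmult Q y z)"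
  by (simp add: dimer_eq_def ideal_rmult flip: pmult_psub_left)

lemma deq_lmult_basis: "valid_path Q p \<Longrightarrow> dimer_eq Q x y \<Longrightarrow> dimer_eq Q (pmult Q (basis p) x) (pmult Q (basis p) y)"
  by (simp add: dimer_eq_def dimer_ideal.lmult flip: pmult_psub_right)

lemma deq_rmult_basis: "valid_path Q p \<Longrightarrow> dimer_eq Q x y \<Longrightarrow> dimer_eq Q (pmult Q x (basis p)) (pmult Q y (basis p))"
  by (simp add: dimer_eq_def dimer_ideal.rmult flip: pmult_psub_left)

lemma deq_sum:
  assumes "finite S" "\<forall>i\<in>S. dimer_eq Q (f i) (g i)"
  shows "dimer_eq Q (\<lambda>q. \<Sum>i\<in>S. f i q) (\<lambda>q. \<Sum>i\<in>S. g i q)"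
proof -
  have "psub (\<lambda>q. \<Sum>i\<in>S. f i q) (\<lambda>q. \<Sum>i\<in>S. g i q) = (\<lambda>q. \<Sum>i\<in>S. psub (f i) (g i) q)"
    by (simp add: psub_def sum_subtractf)
  then show ?thesis using assms ideal_sum[of S "\<lambda>i. psub (f i) (g i)" Q]
    by (simp add: dimer_eq_def)
qed

lemma deq_scale: "dimer_eq Q x y \<Longrightarrow> dimer_eq Q (\<lambda>q. c * x q) (\<lambda>q. c * y q)"
  using ideal_scale[of "psub x y" Q c] by (simp add: dimer_eq_def psub_def right_diff_distrib)


lemma tri_swap:
  fixes g :: "nat \<Rightarrow> nat \<Rightarrow> 'b::comm_monoid_add"
  shows "(\<Sum>k\<in>{0..n}. \<Sum>j\<in>{0..k}. g j k) = (\<Sum>j\<in>{0..n}. \<Sum>k\<in>{j..n}. g j k)"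
proof (induction n)
  case 0 then show ?case by simp
next
  case (Suc n)
  have "(\<Sum>j\<in>{0..Suc n}. \<Sum>k\<in>{j..Suc n}. g j k) =
        (\<Sum>j\<in>{0..n}. \<Sum>k\<in>{j..Suc n}. g j k) + g (Suc n) (Suc n)" by simp
  also have "(\<Sum>j\<in>{0..n}. \<Sum>k\<in>{j..Suc n}. g j k) = (\<Sum>j\<in>{0..n}. (\<Sum>k\<in>{j..n}. g j k) + g j (Suc n))"
    by (rule sum.cong) auto
  finally show ?case using Suc by (simp add: sum.distrib add_ac)
qed

lemma pmult_assoc:
  fixes Q :: "('v,'a,'f) qwf"
  assumes HQ: "\<forall>\<alpha>\<in>Q1 Q. tgt Q \<alpha> \<in> Q0 Q"
  shows "pmult Q (pmult Q x y) z = pmult Q x (pmult Q y z)"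
proof (rule ext)
  fix p :: "('v,'a) path"
  obtain v as where p: "p = (v, as)" by (cases p)
  show "pmult Q (pmult Q x y) z p = pmult Q x (pmult Q y z) p"
  proof (cases "valid_path Q p")
    case False then show ?thesis by (simp add: pmult_def)
  next
    case True
    let ?n = "length as"
    define g where "g j k = x (v, take j as) * y (vert_at Q p j, drop j (take k as)) * z (vert_at Q p k, drop k as)" for j k
    have L: "pmult Q x y (v, take k as) = (\<Sum>j\<in>{0..k}. x (v, take j as) * y (vert_at Q p j, drop j (take k as)))"
      if "k \<le> ?n" for k
    proof -
      have "valid_path Q (v, take k as)" using True valid_take[of Q v as k] unfolding p by simp
      moreover have "vert_at Q (v, take k as) j = vert_at Q p j" if "j \<le> k" for j
        using that vert_at_take[of j k Q v as] unfolding p by simp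
      ultimately show ?thesis using that by (simp add: pmult_def min_absorb2)
    qed
    have R: "pmult Q y z (vert_at Q p j, drop j as) = (\<Sum>k\<in>{j..?n}. y (vert_at Q p j, drop j (take k as)) * z (vert_at Q p k, drop k as))"
      if "j \<le> ?n" for j
    proof -
      have "valid_path Q (vert_at Q p j, drop j as)" using True valid_drop[OF HQ, of v as j] that unfolding p by simp
      moreover have "vert_at Q (vert_at Q p j, drop j as) m = vert_at Q p (j + m)" if "m \<le> ?n - j" for m
        using vert_at_drop[of j m as Q v] that \<open>j \<le> ?n\<close> True p by simp
      ultimately have "pmult Q y z (vert_at Q p j, drop j as) =
         (\<Sum>m\<in>{0..?n - j}. y (vert_at Q p j, drop j (take (m + j) as)) * z (vert_at Q p (m + j), drop (m + j) as))"
        by (simp add: pmult_def take_drop add.commute)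
      also have "\<dots> = (\<Sum>k\<in>{0 + j..?n - j + j}. y (vert_at Q p j, drop j (take k as)) * z (vert_at Q p k, drop k as))"
        by (rule sum.shift_bounds_cl_nat_ivl[symmetric])
      finally show ?thesis using that by simp
    qed
    have "pmult Q (pmult Q x y) z p = (\<Sum>k\<in>{0..?n}. pmult Q x y (v, take k as) * z (vert_at Q p k, drop k as))"
      using True unfolding pmult_def[of Q "pmult Q x y" z] by (simp add: p)
    also have "\<dots> = (\<Sum>k\<in>{0..?n}. \<Sum>j\<in>{0..k}. g j k)"
      by (rule sum.cong[OF refl]) (simp add: L g_def sum_distrib_right)
    also have "\<dots> = (\<Sum>j\<in>{0..?n}. \<Sum>k\<in>{j..?n}. g j k)" by (rule tri_swap)
    also have "\<dots> = (\<Sum>j\<in>{0..?n}. x (v, take j as) * pmult Q y z (vert_at Q p j, drop j as))"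
      by (rule sum.cong[OF refl]) (simp add: R g_def sum_distrib_left mult.assoc)
    also have "\<dots> = pmult Q x (pmult Q y z) p"
      using True unfolding pmult_def[of Q x "pmult Q y z"] by (simp add: p)
    finally show ?thesis .
  qed
qed


lemma inpa_mult:
  assumes "in_pathalg Q x" "in_pathalg Q y"
  shows "in_pathalg Q (pmult Q x y)"
proof -
  let ?Sx = "{p. x p \<noteq> 0}" and ?Sy = "{p. y p \<noteq> 0}"
  have "{q. pmult Q x y q \<noteq> 0} \<subseteq> (\<lambda>(a,b). pcat a b) ` (?Sx \<times> ?Sy)"
  proof
    fix q assume "q \<in> {q. pmult Q x y q \<noteq> 0}"
    then have v: "valid_path Q q" and ne: "(\<Sum>k\<in>{0..length (snd q)}. x (fst q, take k (snd q)) * y (vert_at Q q k, drop k (snd q))) \<noteq> 0"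
      by (auto simp: pmult_def split: if_splits)
    then obtain k where "x (fst q, take k (snd q)) * y (vert_at Q q k, drop k (snd q)) \<noteq> 0"
      using sum.not_neutral_contains_not_neutral by blast
    moreover have "q = pcat (fst q, take k (snd q)) (vert_at Q q k, drop k (snd q))"
      by (simp add: pcat_def)
    ultimately show "q \<in> (\<lambda>(a,b). pcat a b) ` (?Sx \<times> ?Sy)" by force
  qed
  moreover have "finite ((\<lambda>(a,b). pcat a b) ` (?Sx \<times> ?Sy))"
    using assms by (simp add: in_pathalg_def)
  ultimately have "finite {q. pmult Q x y q \<noteq> 0}" by (rule finite_subset)
  moreover have "\<forall>p. pmult Q x y p \<noteq> 0 \<longrightarrow> valid_path Q p" by (simp add: pmult_def)
  ultimately show ?thesis by (simp add: in_pathalg_def)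
qed

lemma punit_eq:
  assumes "finite (Q0 Q)"
  shows "punit Q p = (if snd p = [] \<and> fst p \<in> Q0 Q then 1 else 0)"
proof -
  obtain a b where p: "p = (a, b)" by (cases p)
  have "punit Q p = (\<Sum>i\<in>Q0 Q. if i = fst p then (if snd p = [] then 1 else 0) else 0)"
    unfolding punit_def basis_def p by (rule sum.cong) auto
  also have "\<dots> = (if snd p = [] \<and> fst p \<in> Q0 Q then 1 else 0)"
    using assms unfolding p by (simp add: sum.delta')
  finally show ?thesis .
qed

lemma inpa_punit:
  assumes "finite (Q0 Q)"
  shows "in_pathalg Q (punit Q)"
proof -
  have "{p. punit Q p \<noteq> 0} \<subseteq> (\<lambda>i. (i, [])) ` Q0 Q"
    by (auto simp: punit_eq[OF assms] split: if_splits)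
  then show ?thesis using assms
    by (auto simp: in_pathalg_def punit_eq valid_path_def composable_list_def intro: finite_subset split: if_splits)
qed

lemma punit_left:
  assumes "finite (Q0 Q)" "in_pathalg Q x"
  shows "pmult Q (punit Q) x = x"
proof (rule ext)
  fix q
  show "pmult Q (punit Q) x q = x q"
  proof (cases "valid_path Q q")
    case False
    then have "x q = 0" using assms(2) unfolding in_pathalg_def by blast
    then show ?thesis using False by (simp add: pmult_def)
  next
    case True
    then have f: "fst q \<in> Q0 Q" by (simp add: valid_path_def)
    have "(\<Sum>k\<in>{0..length (snd q)}. punit Q (fst q, take k (snd q)) * x (vert_at Q q k, drop k (snd q)))
       = (\<Sum>k\<in>{0..length (snd q)}. if k = 0 then x q else 0)"
    proof (rule sum.cong[OF refl])
      fix k assume "k \<in> {0..length (snd q)}"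
      then show "punit Q (fst q, take k (snd q)) * x (vert_at Q q k, drop k (snd q)) = (if k = 0 then x q else 0)"
        using f by (auto simp: punit_eq[OF assms(1)] vert_at_def)
    qed
    then show ?thesis using True by (simp add: pmult_def)
  qed
qed

lemma punit_right:
  assumes "finite (Q0 Q)" "\<forall>\<alpha>\<in>Q1 Q. tgt Q \<alpha> \<in> Q0 Q" "in_pathalg Q x"
  shows "pmult Q x (punit Q) = x"
proof (rule ext)
  fix q
  show "pmult Q x (punit Q) q = x q"
  proof (cases "valid_path Q q")
    case False
    then have "x q = 0" using assms(3) unfolding in_pathalg_def by blast
    then show ?thesis using False by (simp add: pmult_def)
  next
    case True
    obtain v l where q: "q = (v, l)" by (cases q)
    have f: "vert_at Q q (length l) \<in> Q0 Q" using vert_at_in_Q0[OF assms(2), of v l] True q by simp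
    have "(\<Sum>k\<in>{0..length (snd q)}. x (fst q, take k (snd q)) * punit Q (vert_at Q q k, drop k (snd q)))
       = (\<Sum>k\<in>{0..length l}. if k = length l then x q else 0)"
    proof (rule sum.cong)
      fix k assume "k \<in> {0..length l}"
      then show "x (fst q, take k (snd q)) * punit Q (vert_at Q q k, drop k (snd q)) = (if k = length l then x q else 0)"
        using f q by (auto simp: punit_eq[OF assms(1)])
    qed (simp add: q)
    then show ?thesis using True by (simp add: pmult_def)
  qed
qed



lemma D_facts:
  assumes "dimer_quiver Q"
  shows "finite (Q0 Q)" "finite (Q2 Q)" "\<forall>\<alpha>\<in>Q1 Q. tgt Q \<alpha> \<in> Q0 Q" "\<forall>\<alpha>\<in>Q1 Q. src Q \<alpha> \<in> Q0 Q"
    "\<forall>\<alpha>\<in>Q1 Q. src Q \<alpha> \<noteq> tgt Q \<alpha>" "Q2p Q \<inter> Q2m Q = {}"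
    "\<forall>F\<in>Q2 Q. is_cycle Q (bd Q F)"
  using assms by (auto simp: dimer_quiver_def)

definition cyc :: "('v, 'a, 'f) qwf \<Rightarrow> 'f \<Rightarrow> nat \<Rightarrow> ('v,'a) path" where
  "cyc Q F k = (src Q (bd Q F ! (k mod length (bd Q F))), rotate k (bd Q F))"

lemma cyc_mod: "cyc Q F (k mod length (bd Q F)) = cyc Q F k"
  using rotate_conv_mod[of k "bd Q F", symmetric] by (simp add: cyc_def)

context
  fixes Q :: "('v,'a,'f) qwf" and F :: 'f
  assumes D: "dimer_quiver Q" and F: "F \<in> Q2 Q"
begin

lemma face_basic:
  "bd Q F \<noteq> []" "set (bd Q F) \<subseteq> Q1 Q" "composable_list Q (bd Q F)"
  "tgt Q (last (bd Q F)) = src Q (hd (bd Q F))"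
  using D_facts(7)[OF D] F by (auto simp: is_cycle_def valid_path_def)

lemma cyc_next:
  assumes "k < length (bd Q F)"
  shows "tgt Q (bd Q F ! k) = src Q (bd Q F ! (Suc k mod length (bd Q F)))"
proof (cases "Suc k < length (bd Q F)")
  case True then show ?thesis using face_basic(3) by (simp add: composable_list_def)
next
  case False
  then have k: "k = length (bd Q F) - 1" using assms by simp
  then show ?thesis using face_basic(1,4)
    by (simp add: last_conv_nth hd_conv_nth)
qed

lemma valid_cyc: "valid_path Q (cyc Q F k)"
proof -
  let ?c = "bd Q F" let ?n = "length (bd Q F)"
  have n: "?n > 0" using face_basic(1) by simp
  have nth: "rotate k ?c ! m = ?c ! ((k + m) mod ?n)" if "m < ?n" for m
    using nth_rotate that by blast
  have comp: "composable_list Q (rotate k ?c)"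
    unfolding composable_list_def
  proof (intro allI impI)
    fix m assume m: "Suc m < length (rotate k ?c)"
    then have "tgt Q (?c ! ((k + m) mod ?n)) = src Q (?c ! (Suc ((k + m) mod ?n) mod ?n))"
      using cyc_next n by simp
    also have "Suc ((k + m) mod ?n) mod ?n = (k + Suc m) mod ?n" by (simp add: mod_Suc_eq)
    finally show "tgt Q (rotate k ?c ! m) = src Q (rotate k ?c ! Suc m)"
      using m nth by simp
  qed
  have hd: "hd (rotate k ?c) = ?c ! (k mod ?n)"
    using nth[of 0] n face_basic(1) by (simp add: hd_conv_nth)
  have "?c ! (k mod ?n) \<in> Q1 Q" using face_basic(2) n by (simp add: subset_iff)
  then show ?thesis using D_facts(4)[OF D] comp hd face_basic(2)
    by (simp add: cyc_def valid_path_def)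
qed

lemma vend_cyc: "vend Q (cyc Q F k) = fst (cyc Q F k)"
proof -
  let ?c = "bd Q F" let ?n = "length (bd Q F)"
  have n: "?n > 0" using face_basic(1) by simp
  have "last (rotate k ?c) = rotate k ?c ! (?n - 1)" using face_basic(1) by (simp add: last_conv_nth)
  also have "\<dots> = ?c ! ((k + (?n - 1)) mod ?n)" using n nth_rotate[of "?n - 1" ?c k] by simp
  finally have l: "last (rotate k ?c) = ?c ! ((k + (?n - 1)) mod ?n)" .
  have "tgt Q (?c ! ((k + (?n - 1)) mod ?n)) = src Q (?c ! (Suc ((k + (?n - 1)) mod ?n) mod ?n))"
    using cyc_next n by simp
  also have "Suc ((k + (?n - 1)) mod ?n) mod ?n = Suc (k + (?n - 1)) mod ?n"
    by (simp add: mod_Suc_eq)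
  also have "Suc (k + (?n - 1)) = k + ?n" using n by simp
  also have "(k + ?n) mod ?n = k mod ?n" by simp
  finally show ?thesis using l face_basic(1) by (simp add: cyc_def vend_simp)
qed

lemma rot_at_eq: "k < length (bd Q F) \<Longrightarrow> rot_at (bd Q F) k = rotate k (bd Q F)"
  by (simp add: rot_at_def rotate_drop_take)

lemma rot_hd: "k < length (bd Q F) \<Longrightarrow> rotate k (bd Q F) = bd Q F ! k # tl (rotate k (bd Q F))"
proof -
  assume k: "k < length (bd Q F)"
  have ne: "rotate k (bd Q F) \<noteq> []" using face_basic(1) by simp
  have "hd (rotate k (bd Q F)) = rotate k (bd Q F) ! 0" using ne by (simp add: hd_conv_nth)
  also have "\<dots> = bd Q F ! k" using k face_basic(1) nth_rotate[of 0 "bd Q F" k] by simp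
  finally show ?thesis using ne by (metis list.collapse)
qed

lemma cyc_k: "k < length (bd Q F) \<Longrightarrow> cyc Q F k = (src Q (bd Q F ! k), rotate k (bd Q F))"
  by (simp add: cyc_def)

lemma cyc_Suc: "k < length (bd Q F) \<Longrightarrow>
   cyc Q F (Suc k) = (tgt Q (bd Q F ! k), tl (rotate k (bd Q F)) @ [bd Q F ! k])"
proof -
  assume k: "k < length (bd Q F)"
  have "rotate (Suc k) (bd Q F) = rotate1 (rotate k (bd Q F))" by simp
  also have "\<dots> = tl (rotate k (bd Q F)) @ [bd Q F ! k]"
    using rot_hd[OF k] by (metis rotate1.simps(2) list.sel(3))
  finally show ?thesis using cyc_next[OF k] by (simp add: cyc_def)
qed

lemma pF_left:
  assumes k: "k < length (bd Q F)"
  shows "basis (cyc Q F k) = pmult Q (basis (src Q (bd Q F ! k), [bd Q F ! k])) (basis (pF Q F k))"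
proof -
  let ?g = "bd Q F ! k"
  have pc: "pcat (src Q ?g, [?g]) (pF Q F k) = cyc Q F k"
    using rot_hd[OF k] by (simp add: pcat_def pF_def rot_at_eq[OF k] cyc_k[OF k])
  have "vert_at Q (pcat (src Q ?g, [?g]) (pF Q F k)) (length [?g]) = fst (pF Q F k)"
    by (simp add: pcat_def pF_def vert_at_def)
  then show ?thesis using valid_cyc[of k] pc by (simp add: basis_mult)
qed

lemma pF_right:
  assumes k: "k < length (bd Q F)"
  shows "basis (cyc Q F (Suc k)) = pmult Q (basis (pF Q F k)) (basis (src Q (bd Q F ! k), [bd Q F ! k]))"
proof -
  let ?g = "bd Q F ! k"
  have pc: "pcat (pF Q F k) (src Q ?g, [?g]) = cyc Q F (Suc k)"
    by (simp add: pcat_def pF_def rot_at_eq[OF k] cyc_Suc[OF k])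
  have v: "valid_path Q (tgt Q ?g, tl (rotate k (bd Q F)) @ [?g])"
    using valid_cyc[of "Suc k"] cyc_Suc[OF k] by simp
  have "vert_at Q (pcat (pF Q F k) (src Q ?g, [?g])) (length (snd (pF Q F k))) = src Q ?g"
  proof -
    have "src Q ((tl (rotate k (bd Q F)) @ [?g]) ! length (tl (rotate k (bd Q F)))) = src Q ?g" by (simp only: nth_append_length)
    then show ?thesis using src_at[OF v, of "length (tl (rotate k (bd Q F)))"]
      by (simp add: pcat_def pF_def rot_at_eq[OF k] del: length_tl)
  qed
  then show ?thesis using valid_cyc[of "Suc k"] pc by (simp add: basis_mult)
qed

end

definition Occ :: "('v, 'a, 'f) qwf \<Rightarrow> 'a \<Rightarrow> ('f \<times> nat) set" where
  "Occ Q g = {(F, k). F \<in> Q2 Q \<and> k < length (bd Q F) \<and> bd Q F ! k = g}"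

lemma occ_card:
  assumes D: "dimer_quiver Q"
  shows "finite (Occ Q g)" "card (Occ Q g) = occ Q g"
proof -
  have eq: "Occ Q g = Sigma (Q2 Q) (\<lambda>F. {k. k < length (bd Q F) \<and> g = bd Q F ! k})"
    by (auto simp: Occ_def)
  show "finite (Occ Q g)" unfolding eq using D_facts(2)[OF D] by auto
  have "card (Occ Q g) = (\<Sum>F\<in>Q2 Q. card {k. k < length (bd Q F) \<and> g = bd Q F ! k})"
    unfolding eq using D_facts(2)[OF D] by (subst card_SigmaI) auto
  also have "\<dots> = occ Q g"
    unfolding occ_def by (rule sum.cong) (auto simp: count_list_eq_length_filter length_filter_conv_card)
  finally show "card (Occ Q g) = occ Q g" .
qed

definition CR :: "('v, 'a, 'f) qwf \<Rightarrow> 'f \<times> nat \<Rightarrow> 'f \<times> nat \<Rightarrow> bool" where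
  "CR Q o1 o2 \<longleftrightarrow> dimer_eq Q (basis (cyc Q (fst o1) (snd o1))) (basis (cyc Q (fst o2) (snd o2))) \<and>
      dimer_eq Q (basis (cyc Q (fst o1) (Suc (snd o1)))) (basis (cyc Q (fst o2) (Suc (snd o2))))"

lemma CR_refl: "CR Q o1 o1" by (simp add: CR_def deq_refl)
lemma CR_sym: "CR Q o1 o2 \<Longrightarrow> CR Q o2 o1" by (simp add: CR_def deq_sym)

lemma CR_rel:
  assumes D: "dimer_quiver Q" and g: "internal Q g" and G: "G1 \<in> Q2p Q" "G2 \<in> Q2m Q"
    and j: "j1 < length (bd Q G1)" "bd Q G1 ! j1 = g" "j2 < length (bd Q G2)" "bd Q G2 ! j2 = g"
  shows "CR Q (G1, j1) (G2, j2)"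
proof -
  have rel: "dimer_eq Q (basis (pF Q G1 j1)) (basis (pF Q G2 j2))"
    unfolding dimer_eq_def
    by (rule dimer_ideal.rel) (unfold dimer_relations_def, use assms in blast)
  have G': "G1 \<in> Q2 Q" "G2 \<in> Q2 Q" using G by (auto simp: Q2_def)
  have vg: "valid_path Q (src Q g, [g])"
    using g D_facts(4)[OF D] by (auto simp: internal_def valid_path_def)
  show ?thesis unfolding CR_def fst_conv snd_conv
    using pF_left[OF D G'(1) j(1)] pF_left[OF D G'(2) j(3)] pF_right[OF D G'(1) j(1)] pF_right[OF D G'(2) j(3)]
      deq_lmult_basis[OF vg rel] deq_rmult_basis[OF vg rel] j by simp
qed

lemma W:
  assumes D: "dimer_quiver Q" and g: "g \<in> Q1 Q" and o: "o1 \<in> Occ Q g" "o2 \<in> Occ Q g"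
  shows "CR Q o1 o2"
proof -
  have oc: "occ Q g = 1 \<or> occ Q g = 2" using D g by (simp add: dimer_quiver_def)
  then show ?thesis
  proof
    assume "occ Q g = 1"
    then have "card (Occ Q g) = 1" using occ_card[OF D] by simp
    then obtain x where "Occ Q g = {x}" by (rule card_1_singletonE)
    then show ?thesis using o CR_refl[of Q x] by auto
  next
    assume o2: "occ Q g = 2"
    then obtain G1 G2 where G: "G1 \<in> Q2p Q" "G2 \<in> Q2m Q" "g \<in> set (bd Q G1)" "g \<in> set (bd Q G2)"
      using D g by (auto simp: dimer_quiver_def)
    obtain j1 where j1: "j1 < length (bd Q G1)" "bd Q G1 ! j1 = g" using G(3) by (meson in_set_conv_nth)
    obtain j2 where j2: "j2 < length (bd Q G2)" "bd Q G2 ! j2 = g" using G(4) by (meson in_set_conv_nth)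
    have ne: "G1 \<noteq> G2" using G(1,2) D_facts(6)[OF D] by auto
    have int: "internal Q g" using g o2 by (simp add: internal_def)
    have c12: "CR Q (G1, j1) (G2, j2)" using CR_rel[OF D int G(1,2) j1 j2] .
    have in12: "(G1, j1) \<in> Occ Q g" "(G2, j2) \<in> Occ Q g"
      using G j1 j2 by (auto simp: Occ_def Q2_def)
    have sub: "{(G1, j1), (G2, j2)} \<subseteq> Occ Q g" using in12 by auto
    have "card {(G1, j1), (G2, j2)} = 2" using ne by simp
    then have "{(G1, j1), (G2, j2)} = Occ Q g"
      using card_subset_eq[OF occ_card(1)[OF D] sub] occ_card(2)[OF D] o2 by simp
    then have "o1 \<in> {(G1, j1), (G2, j2)}" "o2 \<in> {(G1, j1), (G2, j2)}" using o by auto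
    then show ?thesis using c12 CR_sym CR_refl by auto
  qed
qed

definition cc :: "('v, 'a, 'f) qwf \<Rightarrow> 'v \<Rightarrow> ('v,'a) path" where
  "cc Q i = (SOME c. c \<in> face_cycles_at Q i)"

lemma occ_exists:
  assumes D: "dimer_quiver Q" and g: "g \<in> Q1 Q"
  shows "\<exists>F k. (F, k) \<in> Occ Q g"
proof -
  have "occ Q g \<noteq> 0" using D g by (auto simp: dimer_quiver_def)
  then have "Occ Q g \<noteq> {}" using occ_card[OF D, of g] by auto
  then show ?thesis by auto
qed

lemma Occ_D:
  assumes "(F, k) \<in> Occ Q g"
  shows "F \<in> Q2 Q" "k < length (bd Q F)" "bd Q F ! k = g"
  using assms by (auto simp: Occ_def)

lemma face_len_pos:
  assumes "dimer_quiver Q" "F \<in> Q2 Q" shows "0 < length (bd Q F)"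
  using face_basic(1)[OF assms] by simp

lemma fca_nonempty:
  assumes D: "dimer_quiver Q" and i: "i \<in> Q0 Q"
  shows "face_cycles_at Q i \<noteq> {}"
proof -
  obtain g where g: "g \<in> Q1 Q" "src Q g = i \<or> tgt Q g = i"
    using D i by (auto simp: dimer_quiver_def arrows_at_def)
  obtain F k where o: "(F, k) \<in> Occ Q g" using occ_exists[OF D g(1)] by blast
  note oD = Occ_D[OF o]
  show ?thesis
  proof (cases "src Q g = i")
    case True
    then have "(i, rot_at (bd Q F) k) \<in> face_cycles_at Q i"
      unfolding face_cycles_at_def using oD by blast
    then show ?thesis by blast
  next
    case False
    then have t: "tgt Q g = i" using g by simp
    let ?k = "Suc k mod length (bd Q F)"
    have "?k < length (bd Q F)" using face_len_pos[OF D oD(1)] by simp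
    moreover have "src Q (bd Q F ! ?k) = i" using cyc_next[OF D oD(1) oD(2)] oD t by simp
    ultimately have "(i, rot_at (bd Q F) ?k) \<in> face_cycles_at Q i"
      unfolding face_cycles_at_def using oD by blast
    then show ?thesis by blast
  qed
qed

lemma cc_cyc:
  assumes D: "dimer_quiver Q" and i: "i \<in> Q0 Q"
  shows "\<exists>F k. F \<in> Q2 Q \<and> k < length (bd Q F) \<and> src Q (bd Q F ! k) = i \<and> cc Q i = cyc Q F k"
proof -
  have "cc Q i \<in> face_cycles_at Q i" unfolding cc_def
    using fca_nonempty[OF D i] by (simp add: some_in_eq)
  then obtain F k where "F \<in> Q2 Q" "k < length (bd Q F)" "src Q (bd Q F ! k) = i" "cc Q i = (i, rot_at (bd Q F) k)"
    unfolding face_cycles_at_def by blast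
  then show ?thesis using rot_at_eq[OF D] cyc_k[OF D] by metis
qed

lemma cc_props:
  assumes D: "dimer_quiver Q" and i: "i \<in> Q0 Q"
  shows "valid_path Q (cc Q i)" "fst (cc Q i) = i" "vend Q (cc Q i) = i"
proof -
  obtain F k where Fk: "F \<in> Q2 Q" "k < length (bd Q F)" "src Q (bd Q F ! k) = i" "cc Q i = cyc Q F k"
    using cc_cyc[OF D i] by blast
  show "valid_path Q (cc Q i)" using Fk(4) valid_cyc[OF D Fk(1), of k] by simp
  show f: "fst (cc Q i) = i" using Fk cyc_k[OF D Fk(1) Fk(2)] by simp
  show "vend Q (cc Q i) = i" using Fk(4) vend_cyc[OF D Fk(1), of k] f by simp
qed

lemma K:
  assumes D: "dimer_quiver Q" and i: "i \<in> Q0 Q" and F: "F \<in> Q2 Q" and k: "k < length (bd Q F)"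
    and s: "src Q (bd Q F ! k) = i"
  shows "dimer_eq Q (basis (cc Q i)) (basis (cyc Q F k))"
proof -
  define P where "P g \<longleftrightarrow> (\<forall>oc\<in>Occ Q g. dimer_eq Q (basis (cc Q i))
      (basis (cyc Q (fst oc) (if src Q g = i then snd oc else Suc (snd oc)))))" for g
  have P_one: "P g" if g: "g \<in> Q1 Q" and oc: "oc \<in> Occ Q g"
    and e: "dimer_eq Q (basis (cc Q i)) (basis (cyc Q (fst oc) (if src Q g = i then snd oc else Suc (snd oc))))" for g oc
    unfolding P_def
  proof
    fix oc' assume oc': "oc' \<in> Occ Q g"
    have "CR Q oc oc'" using W[OF D g oc oc'] .
    then show "dimer_eq Q (basis (cc Q i)) (basis (cyc Q (fst oc') (if src Q g = i then snd oc' else Suc (snd oc'))))"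
      using e unfolding CR_def by (cases "src Q g = i") (auto intro: deq_trans)
  qed
  have edge: "P b" if E: "inc_edge Q i a b \<or> inc_edge Q i b a" and Pa: "P a" for a b
  proof -
    have both: "P y" if E: "inc_edge Q i x y" and Px: "P x" for x y
    proof -
      obtain G where G: "G \<in> Q2 Q" "consec_in (bd Q G) x y" and xy: "x \<in> Q1 Q" "y \<in> Q1 Q"
        "tgt Q x = i" "src Q y = i" using E unfolding inc_edge_def by blast
      obtain j where j: "j < length (bd Q G)" "bd Q G ! j = x" "bd Q G ! (Suc j mod length (bd Q G)) = y"
        using G(2) unfolding consec_in_def by blast
      have ox: "(G, j) \<in> Occ Q x" using G j by (simp add: Occ_def)
      have oy: "(G, Suc j mod length (bd Q G)) \<in> Occ Q y"
        using G j face_len_pos[OF D G(1)] by (simp add: Occ_def)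
      have sx: "src Q x \<noteq> i" using xy D_facts(5)[OF D] by auto
      have "dimer_eq Q (basis (cc Q i)) (basis (cyc Q G (Suc j)))" using Px ox sx unfolding P_def by force
      then have "dimer_eq Q (basis (cc Q i)) (basis (cyc Q G (Suc j mod length (bd Q G))))"
        by (simp add: cyc_mod)
      then show ?thesis using P_one[OF xy(2) oy] xy(4) by simp
    qed
    have bwdE: "P x" if E: "inc_edge Q i x y" and Py: "P y" for x y
    proof -
      obtain G where G: "G \<in> Q2 Q" "consec_in (bd Q G) x y" and xy: "x \<in> Q1 Q" "y \<in> Q1 Q"
        "tgt Q x = i" "src Q y = i" using E unfolding inc_edge_def by blast
      obtain j where j: "j < length (bd Q G)" "bd Q G ! j = x" "bd Q G ! (Suc j mod length (bd Q G)) = y"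
        using G(2) unfolding consec_in_def by blast
      have ox: "(G, j) \<in> Occ Q x" using G j by (simp add: Occ_def)
      have oy: "(G, Suc j mod length (bd Q G)) \<in> Occ Q y"
        using G j face_len_pos[OF D G(1)] by (simp add: Occ_def)
      have sx: "src Q x \<noteq> i" using xy D_facts(5)[OF D] by auto
      have "dimer_eq Q (basis (cc Q i)) (basis (cyc Q G (Suc j mod length (bd Q G))))"
        using Py oy xy(4) unfolding P_def by force
      then have "dimer_eq Q (basis (cc Q i)) (basis (cyc Q G (Suc j)))"
        by (simp add: cyc_mod)
      then show ?thesis using P_one[OF xy(1) ox] sx by simp
    qed
    show ?thesis using E Pa both bwdE by blast
  qed
  obtain F0 k0 where F0: "F0 \<in> Q2 Q" "k0 < length (bd Q F0)" "src Q (bd Q F0 ! k0) = i" "cc Q i = cyc Q F0 k0"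
    using cc_cyc[OF D i] by blast
  let ?b = "bd Q F0 ! k0"
  have b0: "?b \<in> Q1 Q" using face_basic(2)[OF D F0(1)] F0(2) by (simp add: subset_iff)
  have ob: "(F0, k0) \<in> Occ Q ?b" using F0 by (simp add: Occ_def)
  have Pb: "P ?b" using P_one[OF b0 ob] F0 deq_refl[of Q "basis (cyc Q F0 k0)"] by simp
  let ?g = "bd Q F ! k"
  have g: "?g \<in> Q1 Q" using face_basic(2)[OF D F] k by (simp add: subset_iff)
  have conn: "inc_connected Q i" using D i by (simp add: dimer_quiver_def)
  have "?b \<in> arrows_at Q i" "?g \<in> arrows_at Q i" using b0 g F0 s by (auto simp: arrows_at_def)
  then have "(?b, ?g) \<in> {(x, y). inc_edge Q i x y \<or> inc_edge Q i y x}\<^sup>*"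
    using conn unfolding inc_connected_def by blast
  then have "P ?g"
  proof (induction rule: rtrancl_induct)
    case base then show ?case using Pb .
  next
    case (step y z) then show ?case using edge by blast
  qed
  moreover have "(F, k) \<in> Occ Q ?g" using F k by (simp add: Occ_def)
  ultimately show ?thesis using s unfolding P_def by force
qed

lemma KA:
  assumes D: "dimer_quiver Q" and a: "a \<in> Q1 Q"
  shows "dimer_eq Q (basis (pcat (cc Q (src Q a)) (src Q a, [a]))) (basis (pcat (src Q a, [a]) (cc Q (tgt Q a))))"
proof -
  let ?i = "src Q a" and ?j = "tgt Q a"
  have i: "?i \<in> Q0 Q" and j: "?j \<in> Q0 Q" using a D_facts(3,4)[OF D] by auto
  obtain F k where oc: "(F, k) \<in> Occ Q a" using occ_exists[OF D a] by blast
  note oD = Occ_D[OF oc]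
  let ?c = "bd Q F" let ?n = "length (bd Q F)"
  have va: "valid_path Q (?i, [a])" using a i by (simp add: valid_path_def)
  note ci = cc_props[OF D i] and cj = cc_props[OF D j]
  have e1: "basis (pcat (cc Q ?i) (?i, [a])) = pmult Q (basis (cc Q ?i)) (basis (?i, [a]))"
    using basis_mult_ok[OF ci(1) va] ci(3) by simp
  have e2: "dimer_eq Q (pmult Q (basis (cc Q ?i)) (basis (?i, [a]))) (pmult Q (basis (cyc Q F k)) (basis (?i, [a])))"
    using deq_rmult_basis[OF va K[OF D i oD(1) oD(2)]] oD(3) by simp
  have fk: "cyc Q F k = (?i, rotate k ?c)" using cyc_k[OF D oD(1) oD(2)] oD(3) by simp
  have e3: "pmult Q (basis (cyc Q F k)) (basis (?i, [a])) = basis (pcat (cyc Q F k) (?i, [a]))"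
    using basis_mult_ok[OF valid_cyc[OF D oD(1), of k] va] vend_cyc[OF D oD(1), of k] fk by simp
  have e4: "basis (pcat (?i, [a]) (cc Q ?j)) = pmult Q (basis (?i, [a])) (basis (cc Q ?j))"
    using basis_mult_ok[OF va cj(1)] cj(2) by (simp add: vend_simp)
  have km: "Suc k mod ?n < ?n" using face_len_pos[OF D oD(1)] by simp
  have sj: "src Q (?c ! (Suc k mod ?n)) = ?j" using cyc_next[OF D oD(1) oD(2)] oD(3) by simp
  have e5: "dimer_eq Q (pmult Q (basis (?i, [a])) (basis (cc Q ?j))) (pmult Q (basis (?i, [a])) (basis (cyc Q F (Suc k))))"
    using deq_lmult_basis[OF va K[OF D j oD(1) km sj]] cyc_mod[of Q F "Suc k"] by simp
  have fs: "cyc Q F (Suc k) = (?j, tl (rotate k ?c) @ [a])" using cyc_Suc[OF D oD(1) oD(2)] oD(3) by simp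
  have e6: "pmult Q (basis (?i, [a])) (basis (cyc Q F (Suc k))) = basis (pcat (?i, [a]) (cyc Q F (Suc k)))"
    using basis_mult_ok[OF va valid_cyc[OF D oD(1), of "Suc k"]] fs by (simp add: vend_simp)
  have e7: "pcat (cyc Q F k) (?i, [a]) = pcat (?i, [a]) (cyc Q F (Suc k))"
    using fk fs rot_hd[OF D oD(1) oD(2)] oD(3) by (simp add: pcat_def)
  have L: "dimer_eq Q (basis (pcat (cc Q ?i) (?i,[a]))) (basis (pcat (cyc Q F k) (?i,[a])))"
    using e2 unfolding e1[symmetric] e3 .
  have R: "dimer_eq Q (basis (pcat (?i,[a]) (cc Q ?j))) (basis (pcat (?i,[a]) (cyc Q F (Suc k))))"
    using e5 unfolding e4[symmetric] e6 .
  show ?thesis using deq_trans[OF L] deq_sym[OF R] e7 by simp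
qed

lemma t_elem_eq: "t_elem Q = (\<lambda>q. \<Sum>i\<in>Q0 Q. basis (cc Q i) q)"
  by (simp add: t_elem_def u_elem_def cc_def)

lemma sum_single:
  assumes "finite S" "v \<in> S" "\<forall>i\<in>S. i \<noteq> v \<longrightarrow> g i = 0"
  shows "sum g S = g v"
proof -
  have "sum g S = sum g {v}" using assms by (intro sum.mono_neutral_right) auto
  then show ?thesis by simp
qed

lemma t_left:
  assumes D: "dimer_quiver Q" and p: "valid_path Q p"
  shows "pmult Q (t_elem Q) (basis p) = basis (pcat (cc Q (fst p)) p)"
proof -
  have v: "fst p \<in> Q0 Q" using p by (simp add: valid_path_def)
  have z: "pmult Q (basis (cc Q i)) (basis p) = (if i = fst p then basis (pcat (cc Q (fst p)) p) else (\<lambda>_. 0))"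
    if i: "i \<in> Q0 Q" for i
  proof -
    note ci = cc_props[OF D i]
    have "vert_at Q (pcat (cc Q i) p) (length (snd (cc Q i))) = i"
      using ci(3) by (cases "cc Q i") (simp add: pcat_def vert_at_append vend_def)
    then show ?thesis using basis_mult[of Q "cc Q i" p] basis_mult_ok[OF ci(1) p] ci(3)
      by auto
  qed
  show ?thesis unfolding t_elem_eq pmult_sum_left
  proof (rule ext)
    fix q
    show "(\<Sum>i\<in>Q0 Q. pmult Q (basis (cc Q i)) (basis p) q) = basis (pcat (cc Q (fst p)) p) q"
      using sum_single[OF D_facts(1)[OF D] v, of "\<lambda>i. pmult Q (basis (cc Q i)) (basis p) q"] z z[OF v]
      by simp
  qed
qed

lemma t_right:
  assumes D: "dimer_quiver Q" and p: "valid_path Q p"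
  shows "pmult Q (basis p) (t_elem Q) = basis (pcat p (cc Q (vend Q p)))"
proof -
  have v: "vend Q p \<in> Q0 Q" using vert_at_in_Q0[OF D_facts(3)[OF D], of "fst p" "snd p" "length (snd p)"] p
    by (simp add: vend_def)
  have z: "pmult Q (basis p) (basis (cc Q i)) = (if i = vend Q p then basis (pcat p (cc Q (vend Q p))) else (\<lambda>_. 0))"
    if i: "i \<in> Q0 Q" for i
  proof -
    note ci = cc_props[OF D i]
    have "vert_at Q (pcat p (cc Q i)) (length (snd p)) = vend Q p"
      by (cases p) (simp add: pcat_def vert_at_append vend_def)
    then show ?thesis using basis_mult[of Q p "cc Q i"] basis_mult_ok[OF p ci(1)] ci(2)
      by auto
  qed
  show ?thesis unfolding t_elem_eq pmult_sum_right
  proof (rule ext)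
    fix q
    show "(\<Sum>i\<in>Q0 Q. pmult Q (basis p) (basis (cc Q i)) q) = basis (pcat p (cc Q (vend Q p))) q"
      using sum_single[OF D_facts(1)[OF D] v, of "\<lambda>i. pmult Q (basis p) (basis (cc Q i)) q"] z z[OF v]
      by simp
  qed
qed

lemma E3:
  assumes D: "dimer_quiver Q"
  shows "valid_path Q (v, as) \<Longrightarrow>
    dimer_eq Q (basis (pcat (cc Q v) (v, as))) (basis (pcat (v, as) (cc Q (vend Q (v, as)))))"
proof (induction as arbitrary: v)
  case Nil
  then have v: "v \<in> Q0 Q" by (simp add: valid_path_def)
  have "pcat (cc Q v) (v, []) = pcat (v, []) (cc Q v)"
    using cc_props(2)[OF D v] by (cases "cc Q v") (simp add: pcat_def)
  then show ?case by (simp add: vend_simp deq_refl)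
next
  case (Cons a as)
  note HQ = D_facts(3)[OF D]
  have vc: "v \<in> Q0 Q" "a \<in> Q1 Q" "src Q a = v" "valid_path Q (tgt Q a, as)"
    using Cons.prems valid_Cons[OF HQ] by auto
  let ?j = "tgt Q a" let ?a = "(v, [a])" let ?p = "(tgt Q a, as)"
  let ?w = "vend Q (v, a # as)"
  have w: "?w = vend Q ?p" by (simp add: vend_simp)
  have j: "?j \<in> Q0 Q" using HQ vc by auto
  have va: "valid_path Q ?a" using vc by (simp add: valid_path_def)
  note cv = cc_props[OF D vc(1)] and cj = cc_props[OF D j]
  have wq: "?w \<in> Q0 Q" using vert_at_in_Q0[OF HQ Cons.prems, of "length (a # as)"] by (simp add: vend_def)
  note cw = cc_props[OF D wq]
  have vend_a: "vend Q ?a = ?j" by (simp add: vend_simp)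
  have v1: "valid_path Q (pcat (cc Q v) ?a)" using valid_pcat[OF cv(1) va] cv(3) by simp
  have v2: "valid_path Q (pcat ?a (cc Q ?j))" using valid_pcat[OF va cj(1)] cj(2) vend_a by simp
  have v3: "valid_path Q (pcat (cc Q ?j) ?p)" using valid_pcat[OF cj(1) vc(4)] cj(3) by simp
  have v4: "valid_path Q (pcat ?p (cc Q ?w))" using valid_pcat[OF vc(4) cw(1)] cw(2) w by simp
  have s1: "basis (pcat (cc Q v) (v, a # as)) = pmult Q (basis (pcat (cc Q v) ?a)) (basis ?p)"
  proof -
    have "vend Q (pcat (cc Q v) ?a) = ?j" using vend_pcat[of Q "cc Q v" ?a] cv(3) vend_a by simp
    then show ?thesis using basis_mult_ok[OF v1 vc(4)] by (simp add: pcat_def)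
  qed
  have KA': "dimer_eq Q (basis (pcat (cc Q v) ?a)) (basis (pcat ?a (cc Q ?j)))"
    using KA[OF D vc(2)] vc(3) by simp
  have s2: "dimer_eq Q (pmult Q (basis (pcat (cc Q v) ?a)) (basis ?p)) (pmult Q (basis (pcat ?a (cc Q ?j))) (basis ?p))"
    using deq_rmult_basis[OF vc(4) KA'] .
  have s3: "pmult Q (basis (pcat ?a (cc Q ?j))) (basis ?p) = pmult Q (basis ?a) (basis (pcat (cc Q ?j) ?p))"
  proof -
    have "vend Q (pcat ?a (cc Q ?j)) = ?j" using vend_pcat[of Q ?a "cc Q ?j"] cj vend_a by simp
    then have "pmult Q (basis (pcat ?a (cc Q ?j))) (basis ?p) = basis (pcat (pcat ?a (cc Q ?j)) ?p)"
      using basis_mult_ok[OF v2 vc(4)] by simp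
    also have "\<dots> = basis (pcat ?a (pcat (cc Q ?j) ?p))" by (simp add: pcat_def)
    also have "\<dots> = pmult Q (basis ?a) (basis (pcat (cc Q ?j) ?p))"
      using basis_mult_ok[OF va v3] vend_a cj(2) by (simp add: pcat_def)
    finally show ?thesis .
  qed
  have IH: "dimer_eq Q (basis (pcat (cc Q ?j) ?p)) (basis (pcat ?p (cc Q ?w)))"
    using Cons.IH[OF vc(4)] w by simp
  have s4: "dimer_eq Q (pmult Q (basis ?a) (basis (pcat (cc Q ?j) ?p))) (pmult Q (basis ?a) (basis (pcat ?p (cc Q ?w))))"
    using deq_lmult_basis[OF va IH] .
  have s5: "pmult Q (basis ?a) (basis (pcat ?p (cc Q ?w))) = basis (pcat (v, a # as) (cc Q ?w))"
    using basis_mult_ok[OF va v4] vend_a by (simp add: pcat_def)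
  show ?case using deq_trans[OF s2[unfolded s3 s1[symmetric]] s4[unfolded s5]] .
qed

lemma t_comm_basis:
  assumes D: "dimer_quiver Q" and p: "valid_path Q p"
  shows "dimer_eq Q (pmult Q (t_elem Q) (basis p)) (pmult Q (basis p) (t_elem Q))"
  using E3[OF D, of "fst p" "snd p"] p t_left[OF D p] t_right[OF D p] by simp

lemma t_comm:
  assumes D: "dimer_quiver Q" and x: "in_pathalg Q x"
  shows "dimer_eq Q (pmult Q (t_elem Q) x) (pmult Q x (t_elem Q))"
proof -
  let ?S = "{p. x p \<noteq> 0}"
  have fin: "finite ?S" using x by (simp add: in_pathalg_def)
  have eqL: "pmult Q (t_elem Q) x = (\<lambda>q. \<Sum>p\<in>?S. x p * pmult Q (t_elem Q) (basis p) q)"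
    by (subst decomp[OF x]) (simp add: pmult_sum_right pmult_scale_right)
  have eqR: "pmult Q x (t_elem Q) = (\<lambda>q. \<Sum>p\<in>?S. x p * pmult Q (basis p) (t_elem Q) q)"
    by (subst decomp[OF x]) (simp add: pmult_sum_left pmult_scale_left)
  have H: "\<forall>p\<in>?S. dimer_eq Q (\<lambda>q. x p * pmult Q (t_elem Q) (basis p) q) (\<lambda>q. x p * pmult Q (basis p) (t_elem Q) q)"
  proof
    fix p assume "p \<in> ?S"
    then have "valid_path Q p" using x unfolding in_pathalg_def by blast
    then show "dimer_eq Q (\<lambda>q. x p * pmult Q (t_elem Q) (basis p) q) (\<lambda>q. x p * pmult Q (basis p) (t_elem Q) q)"
      by (rule deq_scale[OF t_comm_basis[OF D]])
  qed
  show ?thesis unfolding eqL eqR by (rule deq_sum[OF fin H])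
qed

lemma inpa_t:
  assumes D: "dimer_quiver Q"
  shows "in_pathalg Q (t_elem Q)"
proof -
  have sub: "{q. t_elem Q q \<noteq> 0} \<subseteq> cc Q ` Q0 Q"
  proof
    fix q assume "q \<in> {q. t_elem Q q \<noteq> 0}"
    then have "(\<Sum>i\<in>Q0 Q. basis (cc Q i) q) \<noteq> 0" by (simp add: t_elem_eq)
    then obtain i where "i \<in> Q0 Q" "basis (cc Q i) q \<noteq> 0" using sum.not_neutral_contains_not_neutral by blast
    then show "q \<in> cc Q ` Q0 Q" by (auto simp: basis_def split: if_splits)
  qed
  moreover have "finite (cc Q ` Q0 Q)" using D_facts(1)[OF D] by simp
  ultimately have "finite {q. t_elem Q q \<noteq> 0}" by (rule finite_subset)
  moreover have "\<forall>q. t_elem Q q \<noteq> 0 \<longrightarrow> valid_path Q q" using sub cc_props(1)[OF D] by auto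
  ultimately show ?thesis by (simp add: in_pathalg_def)
qed

lemma pow_central:
  assumes D: "dimer_quiver Q"
  shows "in_pathalg Q (ppow Q (t_elem Q) n) \<and>
    (\<forall>x. in_pathalg Q x \<longrightarrow> dimer_eq Q (pmult Q (ppow Q (t_elem Q) n) x) (pmult Q x (ppow Q (t_elem Q) n)))"
proof (induction n)
  case 0
  show ?case using inpa_punit[OF D_facts(1)[OF D]] punit_left[OF D_facts(1)[OF D]]
      punit_right[OF D_facts(1)[OF D] D_facts(3)[OF D]] by (simp add: deq_refl)
next
  case (Suc n)
  let ?t = "t_elem Q" let ?T = "ppow Q (t_elem Q) n"
  note HQ = D_facts(3)[OF D]
  have it: "in_pathalg Q ?t" using inpa_t[OF D] .
  have iT: "in_pathalg Q ?T" using Suc by simp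
  have "dimer_eq Q (pmult Q (pmult Q ?t ?T) x) (pmult Q x (pmult Q ?t ?T))" if x: "in_pathalg Q x" for x
  proof -
    have a1: "pmult Q (pmult Q ?t ?T) x = pmult Q ?t (pmult Q ?T x)" using pmult_assoc[OF HQ] by simp
    have a2: "dimer_eq Q (pmult Q ?t (pmult Q ?T x)) (pmult Q ?t (pmult Q x ?T))"
      using deq_lmult[OF it] Suc x by simp
    have a3: "pmult Q ?t (pmult Q x ?T) = pmult Q (pmult Q ?t x) ?T" using pmult_assoc[OF HQ] by simp
    have a4: "dimer_eq Q (pmult Q (pmult Q ?t x) ?T) (pmult Q (pmult Q x ?t) ?T)"
      using deq_rmult[OF iT t_comm[OF D x]] .
    have a5: "pmult Q (pmult Q x ?t) ?T = pmult Q x (pmult Q ?t ?T)" using pmult_assoc[OF HQ] by simp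
    show ?thesis using deq_trans[OF a2[unfolded a3] a4] a1 a5 by simp
  qed
  then show ?case using inpa_mult[OF it iT] by simp
qed

theorem lemma1p8:
  fixes Q :: "('v, 'a, 'f) qwf"
  assumes "dimer_quiver Q"
  shows "\<forall>f :: complex poly. central Q (peval Q f (t_elem Q))"
proof (intro allI)
  fix f :: "complex poly"
  show "central Q (peval Q f (t_elem Q))"
    unfolding central_def
  proof (intro allI impI)
    fix x assume x: "in_pathalg Q x"
    let ?P = "\<lambda>k. ppow Q (t_elem Q) k"
    have l: "pmult Q (peval Q f (t_elem Q)) x = (\<lambda>q. \<Sum>k\<in>{0..degree f}. coeff f k * pmult Q (?P k) x q)"
      unfolding peval_def by (simp add: pmult_sum_left pmult_scale_left)
    have r: "pmult Q x (peval Q f (t_elem Q)) = (\<lambda>q. \<Sum>k\<in>{0..degree f}. coeff f k * pmult Q x (?P k) q)"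
      unfolding peval_def by (simp add: pmult_sum_right pmult_scale_right)
    have "\<forall>k\<in>{0..degree f}. dimer_eq Q (\<lambda>q. coeff f k * pmult Q (?P k) x q) (\<lambda>q. coeff f k * pmult Q x (?P k) q)"
    proof
      fix k assume "k \<in> {0..degree f}"
      show "dimer_eq Q (\<lambda>q. coeff f k * pmult Q (?P k) x q) (\<lambda>q. coeff f k * pmult Q x (?P k) q)"
        using pow_central[OF assms, of k] x by (intro deq_scale) blast
    qed
    then show "dimer_eq Q (pmult Q (peval Q f (t_elem Q)) x) (pmult Q x (peval Q f (t_elem Q)))"
      unfolding l r by (rule deq_sum[rotated]) simp
  qed
qed

end
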